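(* Let $n, k, r \ge 1$ be integers and let $S=\{(x_i,z_i)\}_{i=1}^n$ with $x_i\in\mathbb{R}^k$ pairwise distinct and $z_i\in\mathbb{R}^r$ arbitrary. Let $d_1,d_2\ge 1$ be integers satisfying $4\lfloor d_1/4\rfloor\,\lfloor d_2/(4r)\rfloor \ge n$ (in particular $d_1d_2\ge 4nr$). Then there exist weight matrices $W_1\in\mathbb{R}^{d_1\times k}$, $W_2\in\mathbb{R}^{d_2\times d_1}$, $W_3\in\mathbb{R}^{r\times d_2}$ and bias vectors $b_1\in\mathbb{R}^{d_1}$, $b_2\in\mathbb{R}^{d_2}$, $b_3\in\mathbb{R}^{r}$ such that the three-layer ReLU network $$g_\theta(x)=W_3\,\sigma\big(W_2\,\sigma(W_1x+b_1)+b_2\big)+b_3,\qquad \sigma(t)=\max(t,0)\text{ applied entrywise},$$ satisfies $g_\theta(x_i)=z_i$ for all $i=1,\dots,n$.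
   Context: A "three-layer ReLU network" with hidden widths $d_1,d_2$ means a fully connected feedforward map $\mathbb{R}^k\to\mathbb{R}^r$ with two hidden layers of widths $d_1$ and $d_2$, each followed by the entrywise ReLU activation $\sigma(t)=\max(t,0)$, and a final affine (linear plus bias, no activation) output layer, as written in the claim. *)

theory Defs
  imports "HOL-Analysis.Analysis"
begin

text \<open>Vectors in R^m are represented as functions nat => real, of which only
the coordinates 0..m-1 matter; a (p x q) matrix is nat => nat => real with
entries W i j for i < p, j < q.\<close>

definition relu :: "real \<Rightarrow> real" where
  "relu t = max t 0"

definition affine :: "nat \<Rightarrow> (nat \<Rightarrow> nat \<Rightarrow> real) \<Rightarrow> (nat \<Rightarrow> real) \<Rightarrow> (nat \<Rightarrow> real) \<Rightarrow> (nat \<Rightarrow> real)" where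
  "affine q W b x = (\<lambda>i. (\<Sum>j<q. W i j * x j) + b i)"

definition relu_net3 ::
  "nat \<Rightarrow> nat \<Rightarrow> nat \<Rightarrow>
   (nat \<Rightarrow> nat \<Rightarrow> real) \<Rightarrow> (nat \<Rightarrow> real) \<Rightarrow>
   (nat \<Rightarrow> nat \<Rightarrow> real) \<Rightarrow> (nat \<Rightarrow> real) \<Rightarrow>
   (nat \<Rightarrow> nat \<Rightarrow> real) \<Rightarrow> (nat \<Rightarrow> real) \<Rightarrow> (nat \<Rightarrow> real) \<Rightarrow> (nat \<Rightarrow> real)" where
  "relu_net3 k d1 d2 W1 b1 W2 b2 W3 b3 x =
     affine d2 W3 b3 (relu \<circ> affine d1 W2 b2 (relu \<circ> affine k W1 b1 x))"

end

theory Submission imports Defs begin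

lemma relu_pos: "t \<ge> 0 \<Longrightarrow> relu t = t" by (simp add: relu_def)
lemma relu_neg: "t \<le> 0 \<Longrightarrow> relu t = 0" by (simp add: relu_def)

definition gw :: "(nat \<Rightarrow> real) \<Rightarrow> real \<Rightarrow> real \<Rightarrow> nat \<Rightarrow> real" where
  "gw cv \<alpha> \<gamma> e = (if e = 0 then \<gamma> - (-\<alpha> - \<gamma>*cv 0)/(cv 1 - cv 0)
     else if e = 1 then (-\<alpha> - \<gamma>*cv 0)/(cv 1 - cv 0)
     else if e = 2 then -\<gamma> - (\<alpha> + \<gamma>*cv 2)/(cv 3 - cv 2)
     else (\<alpha> + \<gamma>*cv 2)/(cv 3 - cv 2))"

lemma gw_zero: "gw cv 0 0 e = 0" by (simp add: gw_def)

lemma sum4: "(\<Sum>e<(4::nat). f e) = f 0 + f 1 + f 2 + (f 3::real)"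
  by (simp add: eval_nat_numeral)

lemma gw_left:
  assumes "cv 0 < cv 1" "cv 1 \<le> cv 2" "cv 2 < cv 3" "s \<le> cv 0"
  shows "(\<Sum>e<4. gw cv \<alpha> \<gamma> e * relu (s - cv e)) = 0"
  using assms by (simp add: sum4 relu_neg)

lemma gw_mid:
  assumes "cv 0 < cv 1" "cv 1 \<le> cv 2" "cv 2 < cv 3" "cv 1 \<le> s" "s \<le> cv 2"
  shows "(\<Sum>e<4. gw cv \<alpha> \<gamma> e * relu (s - cv e)) = \<alpha> + \<gamma> * s"
proof -
  define w1 where "w1 = (-\<alpha> - \<gamma>*cv 0)/(cv 1 - cv 0)"
  have e1: "w1 * (cv 1 - cv 0) = -\<alpha> - \<gamma>*cv 0" using assms by (simp add: w1_def)
  have "(\<Sum>e<4. gw cv \<alpha> \<gamma> e * relu (s - cv e)) = (\<gamma> - w1) * (s - cv 0) + w1 * (s - cv 1)"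
    using assms by (simp add: sum4 relu_neg relu_pos gw_def w1_def)
  also have "\<dots> = \<gamma> * (s - cv 0) - w1 * (cv 1 - cv 0)"
    by (simp add: algebra_simps)
  also have "\<dots> = \<alpha> + \<gamma> * s" unfolding e1 by (simp add: algebra_simps)
  finally show ?thesis .
qed

lemma gw_right:
  assumes "cv 0 < cv 1" "cv 1 \<le> cv 2" "cv 2 < cv 3" "cv 3 \<le> s"
  shows "(\<Sum>e<4. gw cv \<alpha> \<gamma> e * relu (s - cv e)) = 0"
proof -
  define w1 where "w1 = (-\<alpha> - \<gamma>*cv 0)/(cv 1 - cv 0)"
  define w3 where "w3 = (\<alpha> + \<gamma>*cv 2)/(cv 3 - cv 2)"
  have e1: "w1 * (cv 1 - cv 0) = -\<alpha> - \<gamma>*cv 0" using assms by (simp add: w1_def)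
  have e3: "w3 * (cv 3 - cv 2) = \<alpha> + \<gamma>*cv 2" using assms by (simp add: w3_def)
  have "(\<Sum>e<4. gw cv \<alpha> \<gamma> e * relu (s - cv e)) = (\<gamma> - w1) * (s - cv 0) + w1 * (s - cv 1)
     + (-\<gamma> - w3) * (s - cv 2) + w3 * (s - cv 3)"
    using assms by (simp add: sum4 relu_pos gw_def w1_def w3_def)
  also have "\<dots> = - \<gamma> * cv 0 + \<gamma> * cv 2 - w1 * (cv 1 - cv 0) - w3 * (cv 3 - cv 2)"
    by (simp add: algebra_simps)
  also have "\<dots> = 0" unfolding e1 e3 by simp
  finally show ?thesis .
qed

lemma sum_blocks4: "(\<Sum>j<4*(A::nat). f j) = (\<Sum>a<A. \<Sum>e<4. f (4*a+e)) "
proof (induct A)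
  case 0 then show ?case by simp
next
  case (Suc A)
  have "{..<4 * Suc A} = {..<4*A} \<union> {4*A..<4*A+4}" by auto
  then have "(\<Sum>j<4 * Suc A. f j) = (\<Sum>j<4*A. f j) + (\<Sum>j\<in>{4*A..<4*A+4}. f j)"
  proof -
    assume h: "{..<4 * Suc A} = {..<4*A} \<union> {4*A..<4*A+4}"
    have "(\<Sum>j<4 * Suc A. f j) = (\<Sum>j\<in>{..<4*A} \<union> {4*A..<4*A+4}. f j)" by (simp only: h)
    also have "\<dots> = (\<Sum>j<4*A. f j) + (\<Sum>j\<in>{4*A..<4*A+4}. f j)"
      by (rule sum.union_disjoint) auto
    finally show ?thesis .
  qed
  also have "(\<Sum>j\<in>{4*A..<4*A+4}. f j) = (\<Sum>e<4. f (4*A+e))"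
    by (simp add: eval_nat_numeral)
  finally show ?case using Suc by simp
qed

lemma sum_block:
  fixes g :: "nat \<Rightarrow> real"
  assumes "m*P + P \<le> d"
    and "\<And>q. q < d \<Longrightarrow> q \<notin> {m*P..<m*P+P} \<Longrightarrow> g q = 0"
  shows "(\<Sum>q<d. g q) = (\<Sum>l<P. g (m*P+l))"
proof -
  have "(\<Sum>q<d. g q) = (\<Sum>q\<in>{m*P..<m*P+P}. g q)"
    using assms by (intro sum.mono_neutral_right) auto
  also have "\<dots> = (\<Sum>l<P. g (m*P+l))"
    by (simp add: sum.shift_bounds_nat_ivl[symmetric] lessThan_atLeast0 add.commute)
  finally show ?thesis .
qed

lemma group_fit:
  fixes s Y \<mu> :: "nat \<Rightarrow> real" and K :: real and bz P n p :: nat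
  assumes K: "K > 0" and bp: "bz + p < n" "p < P"
    and mub: "\<And>l. 0 < l \<Longrightarrow> l < P \<Longrightarrow> bz + l < n \<Longrightarrow> s (bz+l-1) < \<mu> (bz+l) \<and> \<mu> (bz+l) < s (bz+l)"
    and mud: "\<And>l. 0 < l \<Longrightarrow> l < P \<Longrightarrow> \<mu> (bz+l) = (s (bz+l-1) + s (bz+l))/2 - (-1)^l * (Y (bz+l) - Y (bz+l-1))/(2*K)"
    and mono: "\<And>\<rho> \<rho>'. \<rho> \<le> \<rho>' \<Longrightarrow> \<rho>' < n \<Longrightarrow> s \<rho> \<le> s \<rho>'"
    and Y0: "Y bz \<ge> 0"
  defines "coef \<equiv> (\<lambda>l. if bz+l \<ge> n then (0,0) else if l=0 then (Y bz - K * s bz, K) else (-2*K*\<mu>(bz+l), 2*K))"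
  shows "(\<Sum>l<P. (-1)^l * relu (fst (coef l) + snd (coef l) * s (bz+p))) = Y (bz+p)"
proof -
  define \<sigma> where "\<sigma> = s (bz+p)"
  define \<Lambda> where "\<Lambda> l = fst (coef l) + snd (coef l) * \<sigma>" for l
  have c1: "(-1)^l * relu (\<Lambda> l) = (if l \<le> p then (-1)^l * \<Lambda> l else 0)" if "l < P" for l
  proof (cases "l \<le> p")
    case True
    have "\<Lambda> l \<ge> 0"
    proof (cases "l = 0")
      case True
      have "s bz \<le> \<sigma>" using mono bp by (simp add: \<sigma>_def)
      then have "K * s bz \<le> K * \<sigma>" using K by simp
      then have "0 \<le> (Y bz - K * s bz) + K * \<sigma>" using Y0 by linarith
      then show ?thesis using True bp by (simp add: \<Lambda>_def coef_def)
    next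
      case False
      have "\<mu> (bz+l) < s (bz+l)" using mub[of l] False that True bp by auto
      moreover have "s (bz+l) \<le> \<sigma>" using mono True bp by (simp add: \<sigma>_def)
      ultimately show ?thesis using False True bp K by (simp add: \<Lambda>_def coef_def algebra_simps)
    qed
    then show ?thesis using True by (simp add: relu_pos)
  next
    case False
    have "\<Lambda> l \<le> 0"
    proof (cases "bz + l < n")
      case True
      have "s (bz+l-1) < \<mu> (bz+l)" using mub[of l] False that True by auto
      moreover have "\<sigma> \<le> s (bz+l-1)" using mono False True by (simp add: \<sigma>_def)
      ultimately show ?thesis using False True K by (simp add: \<Lambda>_def coef_def algebra_simps)
    next
      case False
      then show ?thesis by (simp add: \<Lambda>_def coef_def)
    qed
    then show ?thesis using False by (simp add: relu_neg)
  qed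
  have "(\<Sum>l<P. (-1)^l * relu (\<Lambda> l)) = (\<Sum>l<P. if l \<le> p then (-1)^l * \<Lambda> l else 0)"
    using c1 by (intro sum.cong) auto
  also have "\<dots> = (\<Sum>l\<in>{..<P} \<inter> {l. l \<le> p}. (-1)^l * \<Lambda> l)"
    by (simp add: sum.inter_filter[symmetric] Int_def)
  also have "{..<P} \<inter> {l. l \<le> p} = {..p}" using bp by auto
  finally have S: "(\<Sum>l<P. (-1)^l * relu (\<Lambda> l)) = (\<Sum>l\<le>p. (-1)^l * \<Lambda> l)" .
  have ind: "p' \<le> p \<Longrightarrow> (\<Sum>l\<le>p'. (-1)^l * \<Lambda> l) = Y (bz+p') + K * (-1)^p' * (\<sigma> - s (bz+p'))" for p'
  proof (induct p')
    case 0
    then show ?case using bp by (simp add: \<Lambda>_def coef_def algebra_simps)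
  next
    case (Suc q)
    have IH: "(\<Sum>l\<le>q. (-1)^l * \<Lambda> l) = Y (bz+q) + K * (-1)^q * (\<sigma> - s (bz+q))" using Suc by simp
    have lt: "bz + Suc q < n" "Suc q < P" using Suc bp by auto
    have L: "\<Lambda> (Suc q) = -2*K*\<mu> (bz + Suc q) + 2*K*\<sigma>" using lt by (simp add: \<Lambda>_def coef_def)
    have M: "\<mu> (bz + Suc q) = (s (bz+q) + s (bz+Suc q))/2 - (-1)^(Suc q) * (Y (bz+Suc q) - Y (bz+q))/(2*K)"
      using mud[of "Suc q"] lt by simp
    have "(\<Sum>l\<le>Suc q. (-1)^l * \<Lambda> l) = Y (bz+q) + K * (-1)^q * (\<sigma> - s (bz+q)) + (-1)^(Suc q) * (-2*K*\<mu> (bz + Suc q) + 2*K*\<sigma>)"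
      using IH L by simp
    also have "\<dots> = Y (bz+Suc q) + K * (-1)^(Suc q) * (\<sigma> - s (bz+Suc q))"
    proof (cases "even q")
      case True
      then show ?thesis unfolding M using K by (simp add: field_simps)
    next
      case False
      then show ?thesis unfolding M using K by (simp add: field_simps)
    qed
    finally show ?case .
  qed
  show ?thesis using S ind[of p] by (simp add: \<Lambda>_def \<sigma>_def)
qed

lemma gap_exists:
  fixes s :: "nat \<Rightarrow> real"
  assumes sm: "\<And>\<rho>. Suc \<rho> < n \<Longrightarrow> s \<rho> < s (Suc \<rho>)"
  shows "\<exists>\<delta>>0. \<forall>\<rho> \<rho>'. \<rho> < \<rho>' \<longrightarrow> \<rho>' < n \<longrightarrow> s \<rho> + \<delta> \<le> s \<rho>'"
proof -
  define D where "D = insert 1 ((\<lambda>\<rho>. s (Suc \<rho>) - s \<rho>) ` {\<rho>. Suc \<rho> < n})"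
  have "finite {\<rho>. Suc \<rho> < n}" by (rule finite_subset[of _ "{..<n}"]) auto
  then have fD: "finite D" unfolding D_def by simp
  define \<delta> where "\<delta> = Min D"
  have pos: "\<delta> > 0" unfolding \<delta>_def using fD
    by (subst Min_gr_iff) (auto simp: D_def sm)
  have g: "\<delta> \<le> s (Suc \<rho>) - s \<rho>" if "Suc \<rho> < n" for \<rho>
    unfolding \<delta>_def using fD that by (intro Min_le) (auto simp: D_def)
  have "s \<rho> + \<delta> \<le> s \<rho>'" if "\<rho> < \<rho>'" "\<rho>' < n" for \<rho> \<rho>'
    using that
  proof (induct \<rho>')
    case 0 then show ?case by simp
  next
    case (Suc q)
    show ?case
    proof (cases "\<rho> = q")
      case True then show ?thesis using g[of q] Suc by simp
    next
      case False
      then have "s \<rho> + \<delta> \<le> s q" using Suc by simp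
      moreover have "s q < s (Suc q)" using sm Suc by simp
      ultimately show ?thesis by simp
    qed
  qed
  then show ?thesis using pos by blast
qed

lemma mid_aux:
  fixes a x y u :: real
  assumes "\<bar>a\<bar> < (y - x)/2" "u = (x + y)/2 - a"
  shows "x < u \<and> u < y"
proof -
  have h1: "a < (y - x)/2" using assms(1) by (simp add: abs_less_iff)
  have h2: "-a < (y - x)/2" using assms(1) by (simp add: abs_less_iff)
  show ?thesis using h1 h2 assms(2) by (simp add: field_simps)
qed

lemma core:
  fixes n A P r d1 d2 :: nat and s :: "nat \<Rightarrow> real" and y :: "nat \<Rightarrow> nat \<Rightarrow> real"
  assumes nAP: "n \<le> A*P" and d1: "4*A \<le> d1" and d2: "r*P \<le> d2" and P: "P \<ge> 1"
    and smono: "\<And>\<rho>. Suc \<rho> < n \<Longrightarrow> s \<rho> < s (Suc \<rho>)"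
  shows "\<exists>c W2 W3 b3. \<forall>\<rho><n. \<forall>m<r.
     (\<Sum>q<d2. W3 m q * relu (\<Sum>j<d1. W2 q j * relu (s \<rho> - c j))) + b3 m = y \<rho> m"
proof -
  obtain \<delta> where \<delta>: "\<delta> > 0" and gap: "\<And>\<rho> \<rho>'. \<rho> < \<rho>' \<Longrightarrow> \<rho>' < n \<Longrightarrow> s \<rho> + \<delta> \<le> s \<rho>'"
    using gap_exists[of n s, OF smono] by blast
  have mono: "s \<rho> \<le> s \<rho>'" if "\<rho> \<le> \<rho>'" "\<rho>' < n" for \<rho> \<rho>'
  proof (cases "\<rho> = \<rho>'")
    case False
    then have "s \<rho> + \<delta> \<le> s \<rho>'" using gap that by simp
    then show ?thesis using \<delta> by simp
  qed simp
  define M0 where "M0 = (\<Sum>\<rho><n. \<Sum>m<r. \<bar>y \<rho> m\<bar>)"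
  have yb: "\<bar>y \<rho> m\<bar> \<le> M0" if "\<rho> < n" "m < r" for \<rho> m
  proof -
    have "\<bar>y \<rho> m\<bar> \<le> (\<Sum>m<r. \<bar>y \<rho> m\<bar>)"
      using that by (intro member_le_sum) auto
    also have "\<dots> \<le> M0" unfolding M0_def
      using that by (intro member_le_sum[where f="\<lambda>\<rho>. \<Sum>m<r. \<bar>y \<rho> m\<bar>"]) (auto intro: sum_nonneg)
    finally show ?thesis .
  qed
  have M0: "M0 \<ge> 0" unfolding M0_def by (intro sum_nonneg) auto
  define K where "K = (2*M0+1)/\<delta>"
  have K: "K > 0" using M0 \<delta> by (simp add: K_def)
  have Kd: "K * \<delta> = 2*M0+1" using \<delta> by (simp add: K_def)
  define Yt where "Yt m \<rho> = y \<rho> m + M0" for m \<rho>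
  define \<mu> where "\<mu> m \<rho> = (s (\<rho>-1) + s \<rho>)/2 - (-1)^(\<rho> mod P) * (Yt m \<rho> - Yt m (\<rho>-1))/(2*K)" for m \<rho>
  define coef where "coef m a l = (if a*P+l \<ge> n then (0,0) else if l=0 then (Yt m (a*P) - K * s (a*P), K)
      else (-2*K*\<mu> m (a*P+l), 2*K))" for m a l
  define lo where "lo a = s (a*P)" for a :: nat
  define hi where "hi a = s (min (a*P+P-1) (n-1))" for a :: nat
  define cv where "cv a e = (if e=0 then lo a - \<delta>/2 else if e=1 then lo a - \<delta>/4 else if e=2 then hi a + \<delta>/4 else hi a + \<delta>/2)" for a and e :: nat
  define c where "c j = cv (j div 4) (j mod 4)" for j
  define W2 where "W2 q j = (if q < r*P \<and> j < 4*A then gw (cv (j div 4)) (fst (coef (q div P) (j div 4) (q mod P)))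
      (snd (coef (q div P) (j div 4) (q mod P))) (j mod 4) else 0)" for q j
  define W3 where "W3 m q = (if q < r*P \<and> q div P = m then (-1)^(q mod P) else (0::real))" for m q
  define b3 where "b3 m = -M0" for m :: nat

  have mub: "s (\<rho>-1) < \<mu> m \<rho> \<and> \<mu> m \<rho> < s \<rho>" if "0 < \<rho>" "\<rho> < n" "m < r" for m \<rho>
  proof -
    define D where "D = Yt m \<rho> - Yt m (\<rho>-1)"
    have "\<bar>y \<rho> m\<bar> \<le> M0" "\<bar>y (\<rho>-1) m\<bar> \<le> M0" using yb that by auto
    then have "\<bar>D\<bar> \<le> 2*M0" by (simp add: D_def Yt_def abs_le_iff)
    moreover have "\<delta> \<le> s \<rho> - s (\<rho>-1)" using gap[of "\<rho>-1" \<rho>] that by simp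
    then have "K * \<delta> \<le> K * (s \<rho> - s (\<rho>-1))" using K by simp
    ultimately have lt: "\<bar>D\<bar> < K * (s \<rho> - s (\<rho>-1))" using Kd by simp
    have "\<bar>(-1)^(\<rho> mod P) * D / (2*K)\<bar> = \<bar>D\<bar> / (2*K)" using K by (simp add: abs_mult power_abs)
    also have "\<dots> < (s \<rho> - s (\<rho>-1)) / 2" using lt K by (simp add: field_simps)
    finally have "\<bar>(-1)^(\<rho> mod P) * D / (2*K)\<bar> < (s \<rho> - s (\<rho>-1)) / 2" .
    moreover have "\<mu> m \<rho> = (s (\<rho>-1) + s \<rho>)/2 - (-1)^(\<rho> mod P) * D / (2*K)"
      by (simp add: \<mu>_def D_def)
    ultimately show ?thesis by (rule mid_aux)
  qed

  have cvo: "cv a 0 < cv a 1 \<and> cv a 1 \<le> cv a 2 \<and> cv a 2 < cv a 3" if "a*P < n" for a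
  proof -
    have "lo a \<le> hi a" unfolding lo_def hi_def using that P by (intro mono) auto
    then show ?thesis using \<delta> by (simp add: cv_def)
  qed

  have L2: "(\<Sum>j<d1. W2 q j * relu (s \<rho> - c j)) = fst (coef (q div P) (\<rho> div P) (q mod P))
      + snd (coef (q div P) (\<rho> div P) (q mod P)) * s \<rho>" if q: "q < r*P" and \<rho>: "\<rho> < n" for q \<rho>
  proof -
    define a0 where "a0 = \<rho> div P"
    have a0A: "a0 < A" unfolding a0_def using \<rho> nAP P by (simp add: div_less_iff_less_mult mult.commute)
    have rl: "\<rho> < a0*P + P" "a0*P \<le> \<rho>"
    proof -
      have "\<rho> div P * P + \<rho> mod P = \<rho>" by (rule div_mult_mod_eq)
      moreover have "\<rho> mod P < P" using P by simp
      ultimately show "\<rho> < a0*P + P" "a0*P \<le> \<rho>" unfolding a0_def by linarith+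
    qed
    define al where "al a = fst (coef (q div P) a (q mod P))" for a
    define ga where "ga a = snd (coef (q div P) a (q mod P))" for a
    define G where "G a = (\<Sum>e<4. gw (cv a) (al a) (ga a) e * relu (s \<rho> - cv a e))" for a
    have "(\<Sum>j<d1. W2 q j * relu (s \<rho> - c j)) = (\<Sum>j<4*A. W2 q j * relu (s \<rho> - c j))"
      using d1 by (intro sum.mono_neutral_right) (auto simp: W2_def)
    also have "\<dots> = (\<Sum>a<A. \<Sum>e<4. W2 q (4*a+e) * relu (s \<rho> - c (4*a+e)))" by (rule sum_blocks4)
    also have "\<dots> = (\<Sum>a<A. G a)"
    proof (intro sum.cong refl)
      fix a assume "a \<in> {..<A}"
      then show "(\<Sum>e<4. W2 q (4*a+e) * relu (s \<rho> - c (4*a+e))) = G a"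
        unfolding G_def using q by (intro sum.cong refl) (auto simp: W2_def c_def al_def ga_def)
    qed
    also have "\<dots> = (\<Sum>a<A. if a = a0 then G a0 else 0)"
    proof (intro sum.cong refl)
      fix a assume "a \<in> {..<A}"
      show "G a = (if a = a0 then G a0 else 0)"
      proof (cases "a = a0")
        case False
        show ?thesis
        proof (cases "a*P < n")
          case nonempty: True
          note o = cvo[OF nonempty]
          show ?thesis
          proof (cases "a < a0")
            case True
            have "a*P+P \<le> a0*P" using True by (metis add.commute mult_Suc less_eq_Suc_le mult_le_mono1)
            moreover have "a0*P \<le> \<rho>" using rl by simp
            ultimately have "min (a*P+P-1) (n-1) < \<rho>" using P by linarith
            then have "hi a + \<delta> \<le> s \<rho>" unfolding hi_def using gap \<rho> by blast
            then have "cv a 3 \<le> s \<rho>" using \<delta> by (simp add: cv_def)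
            then show ?thesis using gw_right[of "cv a"] o False unfolding G_def by simp
          next
            case False2: False
            then have "a0 < a" using False by simp
            then have "(a0+1)*P \<le> a*P" by (intro mult_le_mono1) simp
            moreover have "\<rho> < (a0+1)*P" using rl by simp
            ultimately have "\<rho> < a*P" by simp
            then have "s \<rho> + \<delta> \<le> lo a" unfolding lo_def using gap nonempty by blast
            then have "s \<rho> \<le> cv a 0" using \<delta> by (simp add: cv_def)
            then show ?thesis using gw_left[of "cv a"] o False unfolding G_def by simp
          qed
        next
          case False3: False
          then have "al a = 0" "ga a = 0" by (auto simp: al_def ga_def coef_def)
          then show ?thesis using False unfolding G_def by (simp add: gw_zero)
        qed
      qed simp
    qed
    also have "\<dots> = G a0" using a0A by simp
    also have "\<dots> = al a0 + ga a0 * s \<rho>"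
    proof -
      have ne: "a0*P < n" using \<rho> rl by simp
      have "a0*P \<le> \<rho>" using rl by simp
      then have "lo a0 \<le> s \<rho>" unfolding lo_def using mono \<rho> by blast
      then have 1: "cv a0 1 \<le> s \<rho>" using \<delta> by (simp add: cv_def)
      have "\<rho> \<le> min (a0*P+P-1) (n-1)" using \<rho> rl by linarith
      then have "s \<rho> \<le> hi a0" unfolding hi_def using mono \<rho> by simp
      then have 2: "s \<rho> \<le> cv a0 2" using \<delta> by (simp add: cv_def)
      show ?thesis unfolding G_def using gw_mid[of "cv a0"] cvo[OF ne] 1 2 by simp
    qed
    finally show ?thesis by (simp add: al_def ga_def a0_def)
  qed
  have L3: "(\<Sum>q<d2. W3 m q * g q) = (\<Sum>l<P. (-1)^l * g (m*P+l))" if m: "m < r" for m g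
  proof -
    have "m*P + P \<le> r*P" using m by (metis add.commute mult_Suc less_eq_Suc_le mult_le_mono1)
    then have le: "m*P + P \<le> d2" using d2 by simp
    have "(\<Sum>q<d2. W3 m q * g q) = (\<Sum>l<P. W3 m (m*P+l) * g (m*P+l))"
    proof (rule sum_block[OF le])
      fix q assume "q < d2" "q \<notin> {m*P..<m*P+P}"
      moreover have "q div P = m \<Longrightarrow> q \<in> {m*P..<m*P+P}"
      proof -
        assume "q div P = m"
        moreover have "q div P * P + q mod P = q" by (rule div_mult_mod_eq)
        moreover have "q mod P < P" using P by simp
        ultimately show "q \<in> {m*P..<m*P+P}" by auto
      qed
      ultimately show "W3 m q * g q = 0" by (auto simp: W3_def)
    qed
    also have "\<dots> = (\<Sum>l<P. (-1)^l * g (m*P+l))"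
    proof (intro sum.cong refl)
      fix l assume l: "l \<in> {..<P}"
      then have "m*P + l < r*P" using \<open>m*P + P \<le> r*P\<close> by simp
      moreover have "(m*P+l) div P = m" "(m*P+l) mod P = l" using l P by auto
      ultimately show "W3 m (m*P+l) * g (m*P+l) = (-1)^l * g (m*P+l)" by (simp add: W3_def)
    qed
    finally show ?thesis .
  qed
  show ?thesis
  proof (intro exI allI impI)
    fix \<rho> m assume \<rho>: "\<rho> < n" and m: "m < r"
    define a0 where "a0 = \<rho> div P"
    define p where "p = \<rho> mod P"
    have rp: "\<rho> = a0*P + p" unfolding a0_def p_def by simp
    have pP: "p < P" unfolding p_def using P by simp
    have mPr: "m*P + P \<le> r*P" using m by (metis add.commute mult_Suc less_eq_Suc_le mult_le_mono1)
    have "(\<Sum>q<d2. W3 m q * relu (\<Sum>j<d1. W2 q j * relu (s \<rho> - c j)))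
       = (\<Sum>l<P. (-1)^l * relu (\<Sum>j<d1. W2 (m*P+l) j * relu (s \<rho> - c j)))"
      by (rule L3[OF m])
    also have "\<dots> = (\<Sum>l<P. (-1)^l * relu (fst (coef m a0 l) + snd (coef m a0 l) * s \<rho>))"
    proof (intro sum.cong refl)
      fix l assume l: "l \<in> {..<P}"
      then have "m*P + l < r*P" using mPr by simp
      moreover have "(m*P+l) div P = m" "(m*P+l) mod P = l" using l P by auto
      ultimately show "(-1)^l * relu (\<Sum>j<d1. W2 (m*P+l) j * relu (s \<rho> - c j))
          = (-1)^l * relu (fst (coef m a0 l) + snd (coef m a0 l) * s \<rho>)"
        using L2[of "m*P+l" \<rho>] \<rho> by (simp add: a0_def)
    qed
    also have "\<dots> = Yt m \<rho>"
    proof -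
      have gf: "(\<Sum>l<P. (-1)^l * relu (fst (coef m a0 l) + snd (coef m a0 l) * s (a0*P+p))) = Yt m (a0*P+p)"
        unfolding coef_def
      proof (rule group_fit[where K=K and bz="a0*P" and p=p and n=n and P=P and \<mu>="\<mu> m" and s=s and Y="Yt m"])
        show "K > 0" by (rule K)
        show "a0*P + p < n" using rp \<rho> by simp
        show "p < P" by (rule pP)
        show "s (a0*P+l-1) < \<mu> m (a0*P+l) \<and> \<mu> m (a0*P+l) < s (a0*P+l)"
          if "0 < l" "l < P" "a0*P + l < n" for l
          using mub[of "a0*P+l" m] that m by simp
        show "\<mu> m (a0*P+l) = (s (a0*P+l-1) + s (a0*P+l))/2 - (-1)^l * (Yt m (a0*P+l) - Yt m (a0*P+l-1))/(2*K)"
          if "0 < l" "l < P" for l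
          using that by (simp add: \<mu>_def)
        show "s \<rho>1 \<le> s \<rho>2" if "\<rho>1 \<le> \<rho>2" "\<rho>2 < n" for \<rho>1 \<rho>2 using mono that by blast
        show "0 \<le> Yt m (a0*P)" using yb[of "a0*P" m] rp \<rho> m by (simp add: Yt_def abs_le_iff)
      qed
      then show ?thesis using rp by simp
    qed
    finally show "(\<Sum>q<d2. W3 m q * relu (\<Sum>j<d1. W2 q j * relu (s \<rho> - c j))) + b3 m = y \<rho> m"
      by (simp add: Yt_def b3_def)
  qed
qed

lemma proj_exists:
  fixes x :: "nat \<Rightarrow> nat \<Rightarrow> real"
  assumes k: "k \<ge> 1"
    and distinct: "\<And>i j. i < n \<Longrightarrow> j < n \<Longrightarrow> i \<noteq> j \<Longrightarrow> (\<exists>l<k. x i l \<noteq> x j l)"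
  shows "\<exists>v::real. \<forall>i<n. \<forall>j<n. i \<noteq> j \<longrightarrow> (\<Sum>l<k. v^l * x i l) \<noteq> (\<Sum>l<k. v^l * x j l)"
proof -
  define S where "S = (\<Union>i\<in>{..<n}. \<Union>j\<in>{..<n} - {i}. {v::real. (\<Sum>l\<le>k-1. (x i l - x j l) * v^l) = 0})"
  have kk: "{..k-1} = {..<k}" using k by auto
  have "finite S" unfolding S_def
  proof (intro finite_UN_I finite_lessThan finite_Diff)
    fix i j assume "i \<in> {..<n}" "j \<in> {..<n} - {i}"
    then obtain l where "l < k" "x i l \<noteq> x j l" using distinct by auto
    then have "\<exists>l\<le>k-1. x i l - x j l \<noteq> 0" by (intro exI[of _ l]) auto
    then show "finite {v::real. (\<Sum>l\<le>k-1. (x i l - x j l) * v^l) = 0}"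
      by (rule polyfun_finite_roots[THEN iffD2])
  qed
  then obtain v :: real where "v \<notin> S" using ex_new_if_finite[OF infinite_UNIV_char_0] by blast
  then have h: "(\<Sum>l<k. (x i l - x j l) * v^l) \<noteq> 0" if "i < n" "j < n" "i \<noteq> j" for i j
  proof -
    have "v \<notin> {v::real. (\<Sum>l\<le>k-1. (x i l - x j l) * v^l) = 0}"
      using \<open>v \<notin> S\<close> that unfolding S_def by blast
    then show ?thesis unfolding kk by simp
  qed
  have "(\<Sum>l<k. v^l * x i l) \<noteq> (\<Sum>l<k. v^l * x j l)" if "i < n" "j < n" "i \<noteq> j" for i j
  proof
    assume "(\<Sum>l<k. v^l * x i l) = (\<Sum>l<k. v^l * x j l)"
    then have "(\<Sum>l<k. (x i l - x j l) * v^l) = 0"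
      by (simp add: right_diff_distrib mult.commute[of _ "v^_"] sum_subtractf)
    then show False using h that by blast
  qed
  then show ?thesis by blast
qed

theorem mainTheorem1:
  fixes n k r d1 d2 :: nat
    and x :: "nat \<Rightarrow> nat \<Rightarrow> real"
    and z :: "nat \<Rightarrow> nat \<Rightarrow> real"
  assumes "n \<ge> 1" "k \<ge> 1" "r \<ge> 1" "d1 \<ge> 1" "d2 \<ge> 1"
    and distinct: "\<And>i j. i < n \<Longrightarrow> j < n \<Longrightarrow> i \<noteq> j \<Longrightarrow> (\<exists>l<k. x i l \<noteq> x j l)"
    and width: "4 * (d1 div 4) * (d2 div (4 * r)) \<ge> n"
  shows "\<exists>W1 b1 W2 b2 W3 b3.
           \<forall>i<n. \<forall>m<r. relu_net3 k d1 d2 W1 b1 W2 b2 W3 b3 (x i) m = z i m"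
proof -
  define A where "A = d1 div 4"
  define B where "B = d2 div (4*r)"
  define P where "P = 4*B"
  have "A*P = 4*A*B" by (simp add: P_def)
  moreover have "4*A*B \<ge> n" using width unfolding A_def B_def .
  ultimately have nAP: "n \<le> A*P" by linarith
  have P1: "P \<ge> 1"
  proof (rule ccontr)
    assume "\<not> P \<ge> 1" then have "P = 0" by simp
    then show False using nAP assms(1) by simp
  qed
  have d1': "4*A \<le> d1" unfolding A_def by simp
  have "r*P = (4*r) * (d2 div (4*r))" by (simp add: P_def B_def)
  moreover have "(4*r) * (d2 div (4*r)) \<le> d2" by (rule times_div_less_eq_dividend)
  ultimately have d2': "r*P \<le> d2" by linarith
  have "\<exists>v::real. \<forall>i<n. \<forall>j<n. i \<noteq> j \<longrightarrow> (\<Sum>l<k. v^l * x i l) \<noteq> (\<Sum>l<k. v^l * x j l)"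
  proof (rule proj_exists)
    show "k \<ge> 1" by fact
    show "\<exists>l<k. x i l \<noteq> x j l" if "i < n" "j < n" "i \<noteq> j" for i j using distinct that by blast
  qed
  then obtain v :: real where lam: "\<forall>i<n. \<forall>j<n. i \<noteq> j \<longrightarrow> (\<Sum>l<k. v^l * x i l) \<noteq> (\<Sum>l<k. v^l * x j l)"
    by (elim exE)
  define t where "t i = (\<Sum>l<k. v^l * x i l)" for i
  have inj: "inj_on t {..<n}"
  proof (rule inj_onI)
    fix i j assume ij: "i \<in> {..<n}" "j \<in> {..<n}" "t i = t j"
    show "i = j"
    proof (rule ccontr)
      assume "i \<noteq> j"
      then have "t i \<noteq> t j" using lam ij unfolding t_def by simp
      then show False using ij by simp
    qed
  qed
  define T where "T = t ` {..<n}"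
  define L where "L = sorted_list_of_set T"
  have cardT: "card T = n" unfolding T_def using inj by (simp add: card_image)
  have lenL: "length L = n" unfolding L_def using cardT by simp
  have setL: "set L = T" unfolding L_def T_def by simp
  have sortL: "sorted_wrt (<) L" unfolding L_def by (rule strict_sorted_list_of_set)
  define s where "s \<rho> = L ! \<rho>" for \<rho>
  have smono: "s \<rho> < s (Suc \<rho>)" if "Suc \<rho> < n" for \<rho>
    using sorted_wrt_nth_less[OF sortL, of \<rho> "Suc \<rho>"] that lenL unfolding s_def by simp
  have rk: "\<exists>\<rho><n. s \<rho> = t i" if "i < n" for i
  proof -
    have "t i \<in> set L" using that setL T_def by auto
    then obtain \<rho> where "\<rho> < length L" "L ! \<rho> = t i" by (metis in_set_conv_nth)
    then show ?thesis unfolding s_def using lenL by auto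
  qed
  define y where "y \<rho> m = z (SOME i. i < n \<and> t i = s \<rho>) m" for \<rho> m
  have "\<exists>c W2 W3 b3. \<forall>\<rho><n. \<forall>m<r.
     (\<Sum>q<d2. W3 m q * relu (\<Sum>j<d1. W2 q j * relu (s \<rho> - c j))) + b3 m = y \<rho> m"
  proof (rule core[where s=s and y=y and A=A and P=P])
    show "n \<le> A*P" by (rule nAP)
    show "4*A \<le> d1" by (rule d1')
    show "r*P \<le> d2" by (rule d2')
    show "P \<ge> 1" by (rule P1)
    show "s \<rho> < s (Suc \<rho>)" if "Suc \<rho> < n" for \<rho> using smono that by blast
  qed
  then obtain c W2 W3 b3 where net: "\<forall>\<rho><n. \<forall>m<r.
     (\<Sum>q<d2. W3 m q * relu (\<Sum>j<d1. W2 q j * relu (s \<rho> - c j))) + b3 m = y \<rho> m"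
    by (elim exE)
  define W1 where "W1 j l = v^l" for j l :: nat
  define b1 where "b1 j = - c j" for j
  define b2 where "b2 q = (0::real)" for q :: nat
  have "\<forall>i<n. \<forall>m<r. relu_net3 k d1 d2 W1 b1 W2 b2 W3 b3 (x i) m = z i m"
  proof (intro allI impI)
    fix i m assume i: "i < n" and m: "m < r"
    obtain \<rho> where \<rho>: "\<rho> < n" "s \<rho> = t i" using rk[OF i] by blast
    have sel: "(SOME i'. i' < n \<and> t i' = s \<rho>) = i"
    proof (rule some_equality)
      show "i < n \<and> t i = s \<rho>" using i \<rho> by simp
      fix i' assume "i' < n \<and> t i' = s \<rho>"
      then show "i' = i" using inj i \<rho> unfolding inj_on_def by auto
    qed
    have aff1: "affine k W1 b1 (x i) = (\<lambda>j. t i - c j)"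
      by (simp add: affine_def W1_def b1_def t_def)
    have "relu_net3 k d1 d2 W1 b1 W2 b2 W3 b3 (x i) m
        = (\<Sum>q<d2. W3 m q * relu (\<Sum>j<d1. W2 q j * relu (s \<rho> - c j))) + b3 m"
      unfolding relu_net3_def aff1 by (simp add: affine_def b2_def \<rho>)
    also have "\<dots> = y \<rho> m" using net \<rho> m by blast
    also have "\<dots> = z i m" by (simp add: y_def sel)
    finally show "relu_net3 k d1 d2 W1 b1 W2 b2 W3 b3 (x i) m = z i m" .
  qed
  then show ?thesis by blast
qed

end
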